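(* For all $m,n\ge2$, $$\#\operatorname{vert}(\Box_m,\Diamond_n)\ge 2n+2mn(2n-1)+2mn(m-1)(n-1).$$
   Context: For convex polytopes $P,Q$, $\operatorname{Hom}(P,Q)$ is the set of maps $P\to Q$ that are restrictions of affine maps $\operatorname{Aff}(P)\to\operatorname{Aff}(Q)$; it is a convex polytope in the affine space of affine maps $\operatorname{Aff}(P)\to\operatorname{Aff}(Q)$, and $\operatorname{vert}(P,Q)$ denotes its set of vertices. $\Box_m=\operatorname{conv}\{(a_1,\ldots,a_m):a_i=\pm1\}\subset\mathbb{R}^m$, $\Diamond_n=\operatorname{conv}(\pm e_1,\ldots,\pm e_n)\subset\mathbb{R}^n$. *)

theory Defs
  imports "HOL-Analysis.Analysis"
begin

definition cube_poly :: "(real ^ 'm) set" where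
  "cube_poly = convex hull {x. \<forall>i. x $ i = 1 \<or> x $ i = -1}"

definition cross_poly :: "(real ^ 'n) set" where
  "cross_poly = convex hull ((\<lambda>i. axis i 1) ` UNIV \<union> (\<lambda>i. axis i (-1)) ` UNIV)"

definition Hom_poly :: "(real ^ 'm) set \<Rightarrow> (real ^ 'n) set \<Rightarrow> ((real ^ 'm ^ 'n) \<times> (real ^ 'n)) set" where
  "Hom_poly P Q = {(A, b). \<forall>x\<in>P. A *v x + b \<in> Q}"

definition vert_poly :: "(real ^ 'm) set \<Rightarrow> (real ^ 'n) set \<Rightarrow> ((real ^ 'm ^ 'n) \<times> (real ^ 'n)) set" where
  "vert_poly P Q = {f. f extreme_point_of Hom_poly P Q}"

end

theory Submission
  imports Defs
begin


definition Sg :: "(real^'m) set" where "Sg = {x. \<forall>i. x $ i = 1 \<or> x $ i = -1}"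

lemma mv_comp: "(A *v x) $ r = (\<Sum>c\<in>UNIV. A$r$c * x$c)"
  by (simp add: matrix_vector_mult_def)

lemma l1_cross: assumes "y \<in> (cross_poly :: (real^'n) set)" shows "(\<Sum>j\<in>UNIV. \<bar>y$j\<bar>) \<le> 1"
proof -
  have "cross_poly \<subseteq> {y::real^'n. (\<Sum>j\<in>UNIV. \<bar>y$j\<bar>) \<le> 1}"
    unfolding cross_poly_def
  proof (rule hull_minimal)
    show "range (\<lambda>i. axis i 1) \<union> range (\<lambda>i. axis i (- 1)) \<subseteq> {y::real^'n. (\<Sum>j\<in>UNIV. \<bar>y$j\<bar>) \<le> 1}"
      by (auto simp: axis_def if_distrib cong: if_cong)
    show "convex {y::real^'n. (\<Sum>j\<in>UNIV. \<bar>y$j\<bar>) \<le> 1}"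
      unfolding convex_def
    proof (intro ballI allI impI, simp)
      fix a b :: "real^'n" and u v :: real
      assume a: "(\<Sum>j\<in>UNIV. \<bar>a$j\<bar>) \<le> 1" and b: "(\<Sum>j\<in>UNIV. \<bar>b$j\<bar>) \<le> 1"
        and u: "0 \<le> u" and v: "0 \<le> v" and uv: "u + v = 1"
      have "(\<Sum>j\<in>UNIV. \<bar>u * a$j + v * b$j\<bar>) \<le> (\<Sum>j\<in>UNIV. u * \<bar>a$j\<bar> + v * \<bar>b$j\<bar>)"
        by (rule sum_mono) (metis abs_mult abs_of_nonneg abs_triangle_ineq u v)
      also have "\<dots> = u * (\<Sum>j\<in>UNIV. \<bar>a$j\<bar>) + v * (\<Sum>j\<in>UNIV. \<bar>b$j\<bar>)"
        by (simp add: sum.distrib sum_distrib_left)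
      also have "\<dots> \<le> u * 1 + v * 1"
        by (intro add_mono mult_left_mono) (use a b u v in auto)
      finally show "(\<Sum>j\<in>UNIV. \<bar>u * a$j + v * b$j\<bar>) \<le> 1" using uv by simp
    qed
  qed
  then show ?thesis using assms by auto
qed

lemma pin_cross: assumes y: "y \<in> (cross_poly :: (real^'n) set)" and s: "\<sigma> = 1 \<or> \<sigma> = -1"
  and ge: "\<sigma> * y$i \<ge> 1" shows "y = axis i \<sigma>"
proof -
  have l1: "(\<Sum>j\<in>UNIV. \<bar>y$j\<bar>) \<le> 1" by (rule l1_cross[OF y])
  have split: "(\<Sum>j\<in>UNIV. \<bar>y$j\<bar>) = \<bar>y$i\<bar> + (\<Sum>j\<in>UNIV-{i}. \<bar>y$j\<bar>)"
    by (simp add: sum.remove)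
  have ai: "\<bar>y$i\<bar> \<ge> 1" using s ge by (auto simp: abs_if split: if_splits)
  have rest: "(\<Sum>j\<in>UNIV-{i}. \<bar>y$j\<bar>) = 0"
    using l1 split ai by (smt (verit) sum_nonneg abs_ge_zero)
  hence z: "\<forall>j\<in>UNIV-{i}. \<bar>y$j\<bar> = 0" by (subst (asm) sum_nonneg_eq_0_iff) auto
  have yi: "y$i = \<sigma>" using s ge ai l1 split rest by (auto simp: abs_if split: if_splits)
  show ?thesis using z yi by (auto simp: vec_eq_iff axis_def)
qed

lemma le1_cross: assumes y: "y \<in> (cross_poly :: (real^'n) set)" and s: "\<sigma> = 1 \<or> \<sigma> = -1"
  shows "\<sigma> * y$i \<le> 1"
proof -
  have "\<bar>y$i\<bar> \<le> (\<Sum>j\<in>UNIV. \<bar>y$j\<bar>)"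
    by (rule member_le_sum) auto
  with l1_cross[OF y] s show ?thesis by (auto simp: abs_if split: if_splits)
qed

lemma axis_in_cross: assumes s: "\<sigma> = 1 \<or> \<sigma> = -1" shows "axis i \<sigma> \<in> (cross_poly :: (real^'n) set)"
  unfolding cross_poly_def using s by (auto intro: hull_inc)

lemma vert_cross: assumes s: "\<sigma> = 1 \<or> \<sigma> = -1"
  shows "axis i \<sigma> extreme_point_of (cross_poly::(real^'n) set)"
  unfolding extreme_point_of_def
proof (intro conjI ballI)
  show "axis i \<sigma> \<in> (cross_poly::(real^'n) set)" by (rule axis_in_cross[OF s])
  fix y z :: "real^'n" assume y: "y \<in> cross_poly" and z: "z \<in> cross_poly"
  show "axis i \<sigma> \<notin> open_segment y z"
  proof
    assume "axis i \<sigma> \<in> open_segment y z"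
    then obtain u where u: "0 < u" "u < 1" and ne: "y \<noteq> z"
      and eq: "axis i \<sigma> = (1 - u) *\<^sub>R y + u *\<^sub>R z" by (auto simp: in_segment)
    have "\<sigma> = (1-u) * y$i + u * z$i" using arg_cong[OF eq, of "\<lambda>v. v$i"] by simp
    hence e: "1 = (1-u) * (\<sigma> * y$i) + u * (\<sigma> * z$i)" using s by (auto simp: algebra_simps)
    have a: "\<sigma> * y$i \<le> 1" by (rule le1_cross[OF y s])
    have c: "\<sigma> * z$i \<le> 1" by (rule le1_cross[OF z s])
    have "(1-u) * (1 - \<sigma> * y$i) + u * (1 - \<sigma> * z$i) = 0" using e by (simp add: algebra_simps)
    moreover have "(1-u) * (1 - \<sigma> * y$i) \<ge> 0" "u * (1 - \<sigma> * z$i) \<ge> 0" using a c u by auto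
    ultimately have "(1-u) * (1 - \<sigma> * y$i) = 0" "u * (1 - \<sigma> * z$i) = 0" by linarith+
    hence "\<sigma> * y$i \<ge> 1" "\<sigma> * z$i \<ge> 1" using u by auto
    hence "y = axis i \<sigma>" "z = axis i \<sigma>" using pin_cross y z s by blast+
    with ne show False by simp
  qed
qed

lemma Sg_in_cube: "x \<in> Sg \<Longrightarrow> x \<in> cube_poly"
  unfolding cube_poly_def Sg_def by (rule hull_inc) simp

lemma hom_mem: assumes "\<forall>x\<in>Sg. A *v x + b \<in> (cross_poly :: (real^'n) set)"
  shows "(A, b) \<in> Hom_poly (cube_poly :: (real^'m) set) (cross_poly :: (real^'n) set)"
proof -
  have "cube_poly \<subseteq> {x::real^'m. A *v x + b \<in> (cross_poly :: (real^'n) set)}"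
    unfolding cube_poly_def
  proof (rule hull_minimal)
    show "{x::real^'m. \<forall>i. x $ i = 1 \<or> x $ i = - 1} \<subseteq> {x. A *v x + b \<in> cross_poly}"
      using assms unfolding Sg_def by auto
    show "convex {x::real^'m. A *v x + b \<in> (cross_poly :: (real^'n) set)}"
      unfolding convex_def
    proof (intro ballI allI impI, simp)
      fix x y :: "real^'m" and u v :: real
      assume x: "A *v x + b \<in> cross_poly" and y: "A *v y + b \<in> cross_poly"
        and u: "0 \<le> u" and v: "0 \<le> v" and uv: "u + v = 1"
      have "A *v (u *\<^sub>R x + v *\<^sub>R y) + b = u *\<^sub>R (A *v x + b) + v *\<^sub>R (A *v y + b)"
        using uv by (simp add: matrix_vector_right_distrib matrix_vector_mult_scaleR algebra_simps
            flip: scaleR_add_left)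
      moreover have "u *\<^sub>R (A *v x + b) + v *\<^sub>R (A *v y + b) \<in> cross_poly"
        using convexD[OF convex_convex_hull x[unfolded cross_poly_def] y[unfolded cross_poly_def] u v uv]
        unfolding cross_poly_def .
      ultimately show "A *v (u *\<^sub>R x + v *\<^sub>R y) + b \<in> cross_poly" by simp
    qed
  qed
  thus ?thesis unfolding Hom_poly_def by auto
qed

lemma determ: fixes A A' :: "real^'m^'n"
  assumes "\<forall>x\<in>Sg. A *v x + b = A' *v x + b'" shows "A = A' \<and> b = b'"
proof -
  define D where "D = A - A'"
  define e where "e = b - b'"
  have D0: "\<forall>x\<in>Sg. D *v x + e = 0" using assms
    by (simp add: D_def e_def matrix_vector_mult_diff_rdistrib algebra_simps)
  have comp: "(\<Sum>c\<in>UNIV. D$r$c * x$c) + e$r = 0" if "x \<in> Sg" for x r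
    using arg_cong[OF D0[rule_format, OF that], of "\<lambda>v. v$r"] by (simp add: mv_comp)
  define one :: "real^'m" where "one = (\<chi> c. 1)"
  have o1: "one \<in> Sg" "-one \<in> Sg" by (auto simp: Sg_def one_def)
  have e0: "e$r = 0" for r
    using comp[OF o1(1), of r] comp[OF o1(2), of r] by (simp add: one_def sum_negf)
  have "D$r$k = 0" for r k
  proof -
    define x :: "real^'m" where "x = (\<chi> c. if c = k then -1 else 1)"
    have "x \<in> Sg" by (auto simp: Sg_def x_def)
    from comp[OF this, of r] e0[of r]
    have "(\<Sum>c\<in>UNIV. D$r$c * (if c = k then -1 else 1)) = 0" by (simp add: x_def)
    moreover have "(\<Sum>c\<in>UNIV. D$r$c * (if c = k then -1 else 1)) = (\<Sum>c\<in>UNIV. D$r$c) - 2 * D$r$k"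
    proof -
      have "(\<Sum>c\<in>UNIV. D$r$c * (if c = k then -1 else 1)) = (\<Sum>c\<in>UNIV. D$r$c - 2 * (if c = k then D$r$c else 0))"
        by (rule sum.cong) auto
      also have "\<dots> = (\<Sum>c\<in>UNIV. D$r$c) - 2 * D$r$k"
        by (simp add: sum_subtractf sum_distrib_left[symmetric])
      finally show ?thesis .
    qed
    moreover have "(\<Sum>c\<in>UNIV. D$r$c) = 0" using comp[OF o1(1), of r] e0[of r] by (simp add: one_def)
    ultimately show ?thesis by simp
  qed
  hence "D = 0" by (simp add: vec_eq_iff)
  moreover have "e = 0" using e0 by (simp add: vec_eq_iff)
  ultimately show ?thesis by (simp add: D_def e_def)
qed

definition Wv :: "(real^'n) set" where "Wv = {axis i \<sigma> | i \<sigma>. \<sigma> = 1 \<or> \<sigma> = -1}"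

lemma ext_hom: fixes A :: "real^'m^'n"
  assumes W: "\<forall>x\<in>Sg. A *v x + b \<in> Wv"
  shows "(A,b) \<in> vert_poly (cube_poly :: (real^'m) set) (cross_poly :: (real^'n) set)"
  unfolding vert_poly_def extreme_point_of_def
proof (intro CollectI conjI ballI)
  show H: "(A, b) \<in> Hom_poly cube_poly cross_poly"
    using W by (intro hom_mem) (force simp: Wv_def intro: axis_in_cross)
  fix g h assume g: "g \<in> Hom_poly (cube_poly :: (real^'m) set) (cross_poly :: (real^'n) set)"
    and h: "h \<in> Hom_poly (cube_poly :: (real^'m) set) (cross_poly :: (real^'n) set)"
  obtain G c where gG: "g = (G, c)" by (cases g)
  obtain H d where hH: "h = (H, d)" by (cases h)
  show "(A, b) \<notin> open_segment g h"
  proof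
    assume "(A, b) \<in> open_segment g h"
    then obtain u where u: "0 < u" "u < 1" and ne: "g \<noteq> h"
      and eq: "(A, b) = (1 - u) *\<^sub>R g + u *\<^sub>R h" by (auto simp: in_segment)
    have eA: "A = (1-u) *\<^sub>R G + u *\<^sub>R H" and eb: "b = (1-u) *\<^sub>R c + u *\<^sub>R d"
      using eq by (auto simp: gG hH)
    have "G *v x + c = H *v x + d" if x: "x \<in> Sg" for x
    proof (rule ccontr)
      assume nq: "G *v x + c \<noteq> H *v x + d"
      have xc: "x \<in> cube_poly" by (rule Sg_in_cube[OF x])
      have gx: "G *v x + c \<in> cross_poly" using g xc by (auto simp: gG Hom_poly_def)
      have hx: "H *v x + d \<in> cross_poly" using h xc by (auto simp: hH Hom_poly_def)
      have val: "A *v x + b = (1-u) *\<^sub>R (G *v x + c) + u *\<^sub>R (H *v x + d)"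
        by (simp add: eA eb matrix_vector_mult_scaleR scaleR_matrix_vector_assoc algebra_simps)
      from W x obtain i \<sigma> where s: "\<sigma> = 1 \<or> \<sigma> = -1" and av: "A *v x + b = axis i \<sigma>"
        unfolding Wv_def by blast
      have "A *v x + b \<in> open_segment (G *v x + c) (H *v x + d)"
        using nq u val by (auto simp: in_segment)
      with vert_cross[OF s, of i] gx hx av show False
        by (auto simp: extreme_point_of_def)
    qed
    with determ have "G = H \<and> c = d" by blast
    with ne show False by (simp add: gG hH)
  qed
qed

definition F2 :: "'m \<Rightarrow> real^'n \<Rightarrow> real^'n \<Rightarrow> (real^'m^'n) \<times> (real^'n)" where
  "F2 k p q = ((\<chi> r c. if c = k then (p$r - q$r)/2 else 0), (1/2) *\<^sub>R (p + q))"

definition F3 :: "'m \<Rightarrow> 'm \<Rightarrow> 'n \<Rightarrow> 'n \<Rightarrow> real \<Rightarrow> (real^'m^'n) \<times> (real^'n)" where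
  "F3 k l i j \<sigma> = ((\<chi> r c. if c = k then ((if r = i then \<sigma> else 0) + (if r = j then 1 else 0))/2
      else if c = l then ((if r = i then \<sigma> else 0) - (if r = j then 1 else 0))/2 else 0), 0)"

lemma sum_two: fixes x :: "real^'m" assumes "k \<noteq> l"
  shows "(\<Sum>c\<in>UNIV. (if c = k then \<alpha> else if c = l then \<beta> else 0) * x$c) = \<alpha> * x$k + \<beta> * x$l"
proof -
  have "(\<Sum>c\<in>UNIV. (if c = k then \<alpha> else if c = l then \<beta> else 0) * x$c)
      = (\<Sum>c\<in>UNIV. (if c = k then \<alpha> * x$k else 0) + (if c = l then \<beta> * x$l else 0))"
    by (rule sum.cong) (use assms in auto)
  also have "\<dots> = \<alpha> * x$k + \<beta> * x$l" by (simp add: sum.distrib)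
  finally show ?thesis .
qed

lemma sum_one: fixes x :: "real^'m"
  shows "(\<Sum>c\<in>UNIV. (if c = k then \<alpha> else 0) * x$c) = \<alpha> * x$k"
proof -
  have "(\<Sum>c\<in>UNIV. (if c = k then \<alpha> else 0) * x$c) = (\<Sum>c\<in>UNIV. (if c = k then \<alpha> * x$k else 0))"
    by (rule sum.cong) auto
  also have "\<dots> = \<alpha> * x$k" by simp
  finally show ?thesis .
qed

lemma F1_vert: assumes "w \<in> Wv"
  shows "(0, w) \<in> vert_poly (cube_poly :: (real^'m) set) (cross_poly :: (real^'n) set)"
  using assms by (intro ext_hom) simp

lemma F2_vert: assumes "p \<in> Wv" "q \<in> Wv"
  shows "F2 k p q \<in> vert_poly (cube_poly :: (real^'m) set) (cross_poly :: (real^'n) set)"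
proof -
  have "fst (F2 k p q) *v x + snd (F2 k p q) \<in> Wv" if x: "x \<in> Sg" for x
  proof -
    have "fst (F2 k p q) *v x + snd (F2 k p q) = (if x$k = 1 then p else q)"
    proof -
      have c: "(fst (F2 k p q) *v x)$r = (p$r - q$r)/2 * x$k" for r
        unfolding mv_comp F2_def by (simp add: sum_one)
      show ?thesis using x unfolding Sg_def vec_eq_iff
        by (auto simp: c F2_def[of k p q, THEN arg_cong[where f=snd], simplified] field_simps)
    qed
    thus ?thesis using assms by simp
  qed
  thus ?thesis using ext_hom[of "fst (F2 k p q)" "snd (F2 k p q)"] by simp
qed

lemma F3_vert: assumes "k \<noteq> l" "i \<noteq> j" "\<sigma> = 1 \<or> \<sigma> = -1"
  shows "F3 k l i j \<sigma> \<in> vert_poly (cube_poly :: (real^'m) set) (cross_poly :: (real^'n) set)"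
proof -
  have "fst (F3 k l i j \<sigma>) *v x + snd (F3 k l i j \<sigma>) \<in> Wv" if x: "x \<in> Sg" for x
  proof -
    have e: "fst (F3 k l i j \<sigma>) *v x + snd (F3 k l i j \<sigma>) =
      (if x$k = 1 then (if x$l = 1 then axis i \<sigma> else axis j 1)
       else (if x$l = 1 then axis j (-1) else axis i (-\<sigma>)))"
    proof -
      have c: "(fst (F3 k l i j \<sigma>) *v x)$r = ((if r = i then \<sigma> else 0) + (if r = j then 1 else 0))/2 * x$k
          + ((if r = i then \<sigma> else 0) - (if r = j then 1 else 0))/2 * x$l" for r
        unfolding mv_comp F3_def by (simp add: sum_two[OF assms(1)])
      have xk: "x$k \<noteq> 1 \<Longrightarrow> x$k = -1" "x$l \<noteq> 1 \<Longrightarrow> x$l = -1" using x by (auto simp: Sg_def)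
      show ?thesis using x assms xk unfolding Sg_def vec_eq_iff
        by (auto simp: c F3_def[THEN arg_cong[where f=snd], simplified] axis_def field_simps)
    qed
    show ?thesis unfolding e Wv_def using assms by (auto; blast)
  qed
  thus ?thesis using ext_hom[of "fst (F3 k l i j \<sigma>)" "snd (F3 k l i j \<sigma>)"] by simp
qed



lemma F2_ent: "fst (F2 k p q) $ r $ c = (if c = k then (p$r - q$r)/2 else 0)"
  "snd (F2 k p q) = (1/2) *\<^sub>R (p + q)" by (simp_all add: F2_def)

lemma F3_ent: "fst (F3 k l i j \<sigma>) $ r $ c = (if c = k then ((if r = i then \<sigma> else 0) + (if r = j then 1 else 0))/2
      else if c = l then ((if r = i then \<sigma> else 0) - (if r = j then 1 else 0))/2 else 0)"
  "snd (F3 k l i j \<sigma>) = 0" by (simp_all add: F3_def)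

lemma F2_inj: assumes e: "F2 k p q = F2 k' p' q'" and ne: "p \<noteq> q"
  shows "k = k' \<and> p = p' \<and> q = q'"
proof -
  have E: "fst (F2 k p q) $ r $ c = fst (F2 k' p' q') $ r $ c" for r c using e by simp
  have S: "p + q = p' + q'" using arg_cong[OF e, of snd] by (simp add: F2_ent)
  obtain r where r: "p$r \<noteq> q$r" using ne by (auto simp: vec_eq_iff)
  have kk: "k = k'" using E[of r k] r by (auto simp: F2_ent split: if_splits)
  have "p$s - q$s = p'$s - q'$s" for s using E[of s k] kk by (simp add: F2_ent)
  moreover have "p$s + q$s = p'$s + q'$s" for s using S by (simp add: vec_eq_iff)
  ultimately have "p$s = p'$s \<and> q$s = q'$s" for s
    by (smt (verit))
  then show ?thesis using kk by (simp add: vec_eq_iff)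
qed

lemma F3_inj: assumes e: "F3 k l i j \<sigma> = F3 k' l' i' j' \<sigma>'" and a: "k \<noteq> l" "i \<noteq> j" "k' \<noteq> l'" "i' \<noteq> j'"
   "\<sigma> = 1 \<or> \<sigma> = -1" "\<sigma>' = 1 \<or> \<sigma>' = -1"
  shows "k = k' \<and> l = l' \<and> i = i' \<and> j = j' \<and> \<sigma> = \<sigma>'"
proof -
  have E: "fst (F3 k l i j \<sigma>) $ r $ c = fst (F3 k' l' i' j' \<sigma>') $ r $ c" for r c using e by simp
  note E1 = E[of j k] E[of j l] E[of i k] E[of i l]
  have M: "fst (F3 k l i j \<sigma>) $ j $ k = 1/2" "fst (F3 k l i j \<sigma>) $ j $ l = -1/2"
    "fst (F3 k l i j \<sigma>) $ i $ k = \<sigma>/2" "fst (F3 k l i j \<sigma>) $ i $ l = \<sigma>/2"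
    using a by (simp_all add: F3_ent)
  have supp: "(c = k' \<or> c = l') \<and> (r = i' \<or> r = j')" if "fst (F3 k' l' i' j' \<sigma>') $ r $ c \<noteq> 0" for r c
    using that by (auto simp: F3_ent split: if_splits)
  have s1: "(k = k' \<or> k = l') \<and> (j = i' \<or> j = j')" using supp[of j k] M(1) E[of j k] by auto
  have s2: "l = k' \<or> l = l'" using supp[of j l] M(2) E[of j l] by auto
  have s3: "i = i' \<or> i = j'" using supp[of i k] M(3) E[of i k] a(5) by auto
  have cols: "(k = k' \<and> l = l') \<or> (k = l' \<and> l = k')" using s1 s2 a by auto
  have rows: "j = j' \<and> i = i'"
  proof (rule ccontr)
    assume "\<not> (j = j' \<and> i = i')"
    hence ji: "j = i'" "i = j'" using s1 s3 a by auto
    have "fst (F3 k' l' i' j' \<sigma>') $ j $ k = fst (F3 k' l' i' j' \<sigma>') $ j $ l"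
      using cols ji a by (auto simp: F3_ent)
    with M E show False by simp
  qed
  have kl: "k = k' \<and> l = l'"
  proof (rule ccontr)
    assume "\<not> (k = k' \<and> l = l')"
    hence "k = l'" "l = k'" using cols by auto
    hence "fst (F3 k' l' i' j' \<sigma>') $ j $ k = -1/2" using rows a by (auto simp: F3_ent)
    with M E show False by simp
  qed
  have "fst (F3 k' l' i' j' \<sigma>') $ i $ k = \<sigma>'/2" using kl rows a by (auto simp: F3_ent)
  with M E have "\<sigma> = \<sigma>'" by simp
  with kl rows show ?thesis by simp
qed

lemma F12_disj: assumes "p \<noteq> q" shows "(0, w) \<noteq> F2 k p q"
proof
  assume e: "(0, w) = F2 k p q"
  obtain r where r: "p$r \<noteq> q$r" using assms by (auto simp: vec_eq_iff)
  have "fst (F2 k p q) $ r $ k = 0" using e by (metis fst_conv zero_index)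
  with r show False by (simp add: F2_ent)
qed

lemma F13_disj: assumes "i \<noteq> j" shows "(0, w) \<noteq> F3 k l i j \<sigma>"
proof
  assume e: "(0, w) = F3 k l i j \<sigma>"
  have "fst (F3 k l i j \<sigma>) $ j $ k = 0" using e by (metis fst_conv zero_index)
  with assms show False by (simp add: F3_ent)
qed

lemma F23_disj: assumes "k' \<noteq> l'" "i \<noteq> j" shows "F2 k p q \<noteq> F3 k' l' i j \<sigma>"
proof
  assume e: "F2 k p q = F3 k' l' i j \<sigma>"
  have E: "fst (F2 k p q) $ r $ c = fst (F3 k' l' i j \<sigma>) $ r $ c" for r c using e by simp
  have a: "fst (F3 k' l' i j \<sigma>) $ j $ k' = 1/2" "fst (F3 k' l' i j \<sigma>) $ j $ l' = -1/2"
    using assms by (simp_all add: F3_ent)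
  have "fst (F2 k p q) $ j $ k' = 0 \<or> fst (F2 k p q) $ j $ l' = 0"
    using assms by (auto simp add: F2_ent)
  with a E[of j k'] E[of j l'] show False by auto
qed


lemma Sg_finite: "finite (Sg :: (real^'m) set)"
proof -
  have "Sg \<subseteq> vec_lambda ` (PiE (UNIV::'m set) (\<lambda>_. {1, -1::real}))"
  proof
    fix x :: "real^'m" assume "x \<in> Sg"
    hence "vec_nth x \<in> PiE UNIV (\<lambda>_. {1, -1::real})" by (auto simp: Sg_def)
    thus "x \<in> vec_lambda ` (PiE (UNIV::'m set) (\<lambda>_. {1, -1::real}))"
      by (metis image_eqI vec_nth_inverse)
  qed
  thus ?thesis by (rule finite_subset) (intro finite_imageI finite_PiE, auto)
qed

lemma cross_polyhedron: "polyhedron (cross_poly :: (real^'n) set)"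
  unfolding cross_poly_def by (intro polytope_imp_polyhedron polytope_convex_hull) auto

lemma inner_lin: fixes a :: "real^'n" and x :: "real^'m"
  shows "a \<bullet> (A *v x + b) = ((\<chi> r c. a$r * x$c), a) \<bullet> (A, b)"
proof -
  have "a \<bullet> (A *v x) = (\<chi> r c. a$r * x$c) \<bullet> A"
    by (simp add: inner_vec_def mv_comp sum_distrib_left ac_simps)
  thus ?thesis by (simp add: inner_add_right)
qed

lemma Hom_polyhedron: "polyhedron (Hom_poly (cube_poly :: (real^'m) set) (cross_poly :: (real^'n) set))"
proof -
  obtain F where F: "finite F" "cross_poly = \<Inter>F"
      "\<forall>h\<in>F. \<exists>a b. a \<noteq> 0 \<and> h = {x::real^'n. a \<bullet> x \<le> b}"
    using cross_polyhedron unfolding polyhedron_def by blast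
  define G where "G = (\<lambda>(x::real^'m, h). {(A::real^'m^'n, b). A *v x + b \<in> h}) ` (Sg \<times> F)"
  have eq: "Hom_poly (cube_poly :: (real^'m) set) (cross_poly :: (real^'n) set) = \<Inter>G"
  proof
    show "Hom_poly cube_poly cross_poly \<subseteq> \<Inter>G"
      unfolding G_def Hom_poly_def using F(2) Sg_in_cube by fastforce
    show "\<Inter>G \<subseteq> Hom_poly cube_poly cross_poly"
    proof
      fix f assume f: "f \<in> \<Inter>G"
      obtain A b where fA: "f = (A, b)" by (cases f)
      have "\<forall>x\<in>Sg. A *v x + b \<in> (cross_poly :: (real^'n) set)"
        using f F(2) unfolding G_def fA by auto
      from hom_mem[OF this] show "f \<in> Hom_poly cube_poly cross_poly" by (simp add: fA)
    qed
  qed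
  have "polyhedron g" if g: "g \<in> G" for g
  proof -
    obtain x h where xh: "x \<in> Sg" "h \<in> F" and gd: "g = {(A::real^'m^'n, b). A *v x + b \<in> h}"
      using g unfolding G_def by auto
    obtain a c where h: "h = {y::real^'n. a \<bullet> y \<le> c}" using F(3) xh by blast
    have "g = {f. ((\<chi> r c. a$r * x$c), a) \<bullet> f \<le> c}"
      unfolding gd h by (auto simp: inner_lin)
    thus ?thesis by (simp add: polyhedron_halfspace_le)
  qed
  moreover have "finite G" unfolding G_def using F(1) Sg_finite by auto
  ultimately show ?thesis unfolding eq by auto
qed

lemma vert_finite: "finite (vert_poly (cube_poly :: (real^'m) set) (cross_poly :: (real^'n) set))"
  unfolding vert_poly_def by (rule finite_polyhedron_extreme_points[OF Hom_polyhedron])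

lemma offdiag_card: assumes "finite S"
  shows "card {(p,q). p \<in> S \<and> q \<in> S \<and> p \<noteq> q} = card S * card S - card S"
proof -
  have e: "{(p,q). p \<in> S \<and> q \<in> S \<and> p \<noteq> q} = S \<times> S - (\<lambda>x. (x,x)) ` S" by auto
  have "card ((\<lambda>x. (x,x)) ` S) = card S" by (rule card_image) (auto simp: inj_on_def)
  moreover have "card (S \<times> S - (\<lambda>x. (x,x)) ` S) = card (S \<times> S) - card ((\<lambda>x. (x,x)) ` S)"
    by (rule card_Diff_subset) (use assms in auto)
  ultimately show ?thesis unfolding e by (simp add: card_cartesian_product)
qed

lemma Wv_eq: "(Wv :: (real^'n) set) = (\<lambda>(i,\<sigma>). axis i \<sigma>) ` (UNIV \<times> {1, -1})"
  unfolding Wv_def by auto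

lemma card_Wv: "card (Wv :: (real^'n) set) = 2 * CARD('n)"
proof -
  have "inj_on (\<lambda>(i::'n,\<sigma>::real). axis i \<sigma>) (UNIV \<times> {1, -1})"
    by (auto simp: inj_on_def axis_eq_axis)
  hence "card (Wv :: (real^'n) set) = card ((UNIV::'n set) \<times> {1, -1::real})"
    unfolding Wv_eq by (rule card_image)
  thus ?thesis by (simp add: card_cartesian_product)
qed

lemma finite_Wv: "finite (Wv :: (real^'n) set)"
  unfolding Wv_eq by simp

lemma sq_minus: "(a::nat) * a - a = a * (a - 1)" by (simp add: diff_mult_distrib2)

lemma arith_final: "2 * (n::nat) + m * (2 * n * (2 * n) - 2 * n) + (m * m - m) * ((n * n - n) * 2)
  = 2 * n + 2 * m * n * (2 * n - 1) + 2 * m * n * (m - 1) * (n - 1)"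
  unfolding sq_minus[of "2*n"] sq_minus[of m] sq_minus[of n] by (simp add: ac_simps)

theorem proposition7p1:
  assumes "CARD('m::finite) \<ge> 2" and "CARD('n::finite) \<ge> 2"
  shows "card (vert_poly (cube_poly :: (real ^ 'm) set) (cross_poly :: (real ^ 'n) set))
    \<ge> 2 * CARD('n) + 2 * CARD('m) * CARD('n) * (2 * CARD('n) - 1)
       + 2 * CARD('m) * CARD('n) * (CARD('m) - 1) * (CARD('n) - 1)"
proof -
  define P where "P = {(p,q). p \<in> (Wv :: (real^'n) set) \<and> q \<in> Wv \<and> p \<noteq> q}"
  define Km where "Km = {(k,l). (k::'m) \<noteq> l}"
  define Kn where "Kn = {(i,j). (i::'n) \<noteq> j}"
  define D3 where "D3 = Km \<times> (Kn \<times> {1, -1::real})"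
  define V1 where "V1 = (\<lambda>w. (0::real^'m^'n, w)) ` (Wv :: (real^'n) set)"
  define V2 where "V2 = (\<lambda>(k::'m, pq). F2 k (fst pq) (snd pq)) ` (UNIV \<times> P)"
  define V3 where "V3 = (\<lambda>(kl, ij, \<sigma>). F3 (fst kl) (snd kl) (fst ij) (snd ij) \<sigma>) ` D3"
  have cP: "card P = 2 * CARD('n) * (2 * CARD('n)) - 2 * CARD('n)"
    unfolding P_def by (simp add: offdiag_card finite_Wv card_Wv)
  have cKm: "card Km = CARD('m) * CARD('m) - CARD('m)"
    using offdiag_card[of "UNIV::'m set"] unfolding Km_def by simp
  have cKn: "card Kn = CARD('n) * CARD('n) - CARD('n)"
    using offdiag_card[of "UNIV::'n set"] unfolding Kn_def by simp
  have fP: "finite P"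
  proof (rule finite_subset)
    show "P \<subseteq> Wv \<times> Wv" unfolding P_def by auto
  qed (intro finite_cartesian_product finite_Wv)
  have c1: "card V1 = 2 * CARD('n)" unfolding V1_def
    by (subst card_image) (auto simp: inj_on_def card_Wv)
  have c2: "card V2 = CARD('m) * card P" unfolding V2_def
  proof (subst card_image)
    show "inj_on (\<lambda>(k::'m, pq). F2 k (fst pq) (snd pq)) (UNIV \<times> P)"
      unfolding inj_on_def P_def using F2_inj by fastforce
  qed (simp add: card_cartesian_product)
  have c3: "card V3 = card Km * (card Kn * 2)" unfolding V3_def
  proof (subst card_image)
    show "inj_on (\<lambda>(kl, ij, \<sigma>). F3 (fst kl) (snd kl) (fst ij) (snd ij) \<sigma>) D3"
    proof (rule inj_onI)
      fix u v assume u: "u \<in> D3" and v: "v \<in> D3"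
        and e: "(\<lambda>(kl, ij, \<sigma>). F3 (fst kl) (snd kl) (fst ij) (snd ij) \<sigma>) u
              = (\<lambda>(kl, ij, \<sigma>). F3 (fst kl) (snd kl) (fst ij) (snd ij) \<sigma>) v"
      obtain k l i j \<sigma> where uu: "u = ((k,l),(i,j),\<sigma>)" by (metis prod.exhaust)
      obtain k' l' i' j' \<sigma>' where vv: "v = ((k',l'),(i',j'),\<sigma>')" by (metis prod.exhaust)
      have "F3 k l i j \<sigma> = F3 k' l' i' j' \<sigma>'" using e by (simp add: uu vv)
      moreover have "k \<noteq> l" "i \<noteq> j" "k' \<noteq> l'" "i' \<noteq> j'" "\<sigma> = 1 \<or> \<sigma> = -1" "\<sigma>' = 1 \<or> \<sigma>' = -1"
        using u v by (auto simp: uu vv D3_def Km_def Kn_def)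
      ultimately show "u = v" using F3_inj by (simp add: uu vv) blast
    qed
  qed (simp add: D3_def card_cartesian_product)
  have sub: "V1 \<union> V2 \<union> V3 \<subseteq> vert_poly (cube_poly :: (real ^ 'm) set) (cross_poly :: (real ^ 'n) set)"
    unfolding V1_def V2_def V3_def P_def D3_def Km_def Kn_def
    by (auto intro!: F1_vert F2_vert F3_vert)
  have fin: "finite V1" "finite V2" "finite V3"
    unfolding V1_def V2_def V3_def D3_def by (auto simp: finite_Wv fP)
  have d12: "V1 \<inter> V2 = {}" unfolding V1_def V2_def P_def using F12_disj by fastforce
  have d13: "V1 \<inter> V3 = {}"
  proof (rule ccontr)
    assume "V1 \<inter> V3 \<noteq> {}"
    then obtain z where z1: "z \<in> V1" and z3: "z \<in> V3" by blast
    from z1 obtain w where zw: "z = (0, w)" unfolding V1_def by blast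
    from z3 obtain u where u: "u \<in> D3" and zu: "z = (\<lambda>(kl, ij, \<sigma>). F3 (fst kl) (snd kl) (fst ij) (snd ij) \<sigma>) u"
      unfolding V3_def by blast
    obtain k l i j \<sigma> where uu: "u = ((k,l),(i,j),\<sigma>)" by (metis prod.exhaust)
    have "i \<noteq> j" using u by (simp add: uu D3_def Kn_def)
    moreover have "(0, w) = F3 k l i j \<sigma>" using zw zu uu by simp
    ultimately show False using F13_disj by blast
  qed
  have d23: "V2 \<inter> V3 = {}"
  proof (rule ccontr)
    assume "V2 \<inter> V3 \<noteq> {}"
    then obtain z where z2: "z \<in> V2" and z3: "z \<in> V3" by blast
    from z2 obtain k p q where zw: "z = F2 k p q" unfolding V2_def by auto
    from z3 obtain u where u: "u \<in> D3" and zu: "z = (\<lambda>(kl, ij, \<sigma>). F3 (fst kl) (snd kl) (fst ij) (snd ij) \<sigma>) u"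
      unfolding V3_def by blast
    obtain k' l' i j \<sigma> where uu: "u = ((k',l'),(i,j),\<sigma>)" by (metis prod.exhaust)
    have "i \<noteq> j" "k' \<noteq> l'" using u by (simp_all add: uu D3_def Kn_def Km_def)
    moreover have "F2 k p q = F3 k' l' i j \<sigma>" using zw zu uu by simp
    ultimately show False using F23_disj by blast
  qed
  have d3: "(V1 \<union> V2) \<inter> V3 = {}" using d13 d23 by auto
  have "card (V1 \<union> V2 \<union> V3) = card V1 + card V2 + card V3"
    using fin d12 d3 by (simp add: card_Un_disjoint)
  also have "\<dots> = 2 * CARD('n) + 2 * CARD('m) * CARD('n) * (2 * CARD('n) - 1)
       + 2 * CARD('m) * CARD('n) * (CARD('m) - 1) * (CARD('n) - 1)"
    unfolding c1 c2 c3 cP cKm cKn by (rule arith_final)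
  finally have "card (V1 \<union> V2 \<union> V3) = 2 * CARD('n) + 2 * CARD('m) * CARD('n) * (2 * CARD('n) - 1)
       + 2 * CARD('m) * CARD('n) * (CARD('m) - 1) * (CARD('n) - 1)" .
  moreover have "card (V1 \<union> V2 \<union> V3) \<le> card (vert_poly (cube_poly :: (real ^ 'm) set) (cross_poly :: (real ^ 'n) set))"
    by (rule card_mono[OF vert_finite sub])
  ultimately show ?thesis by simp
qed

end
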